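(* If $G$ and $H$ are Left dead-ends, then $b(G+H)=b(G)+b(H)$.
   Context: Games are finite partizan games; $o(G)$ is the misère outcome class (ordered $\mathscr{L}>\mathscr{N}>\mathscr{R}$, $\mathscr{L}>\mathscr{P}>\mathscr{R}$). A universe is a set of games closed under options, disjunctive sums, conjugates, and forming $\{\mathscr{G}^L\mid\mathscr{G}^R\}$ from nonempty finite subsets of it; $G\geq_\mathcal{U}H$ means $o(G+X)\geq o(H+X)$ for all $X\in\mathcal{U}$. A Left dead-end is a game all of whose subpositions have no Left option. For Left dead-ends, $G\geq H$ means $G\geq_\mathcal{U}H$ for every universe $\mathcal{U}$, and $G=H$ means $G\geq H$ and $H\geq G$. The birthday $b(G)$ of a Left dead-end $G$ is the minimum height of the game tree of a Left dead-end $K$ with $K=G$. *)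

theory Defs
  imports Main "HOL-Library.FSet"
begin

text \<open>A finite partizan game is given by its finite set of Left options and its
finite set of Right options (games are identified as game trees, i.e. literal
form, not up to any equivalence).\<close>

datatype game = Game (lopts: "game fset") (ropts: "game fset")

lemma game_size_lopt: "x |\<in>| L \<Longrightarrow> size x < size (Game L R)"
  by (induction L) (auto simp: size_fset_overloaded_simps)

lemma game_size_ropt: "x |\<in>| R \<Longrightarrow> size x < size (Game L R)"
  by (induction R) (auto simp: size_fset_overloaded_simps)

lemma fimage_cong_fundef [fundef_cong]:
  "A = B \<Longrightarrow> (\<And>x. x |\<in>| B \<Longrightarrow> f x = g x) \<Longrightarrow> f |`| A = g |`| B"
  by (rule fset.map_cong)

function gsum :: "game \<Rightarrow> game \<Rightarrow> game" where
  "gsum (Game GL GR) (Game HL HR) =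
     Game ((\<lambda>x. gsum x (Game HL HR)) |`| GL |\<union>| (\<lambda>y. gsum (Game GL GR) y) |`| HL)
          ((\<lambda>x. gsum x (Game HL HR)) |`| GR |\<union>| (\<lambda>y. gsum (Game GL GR) y) |`| HR)"
  by pat_completeness auto
termination
  by (relation "measure (\<lambda>(g, h). size g + size h)")
     (auto dest: game_size_lopt game_size_ropt)

function conj :: "game \<Rightarrow> game" where
  "conj (Game GL GR) = Game (conj |`| GR) (conj |`| GL)"
  by pat_completeness auto
termination
  by (relation "measure size") (auto dest: game_size_lopt game_size_ropt)

text \<open>Misere play: a player who cannot move on their turn wins.
  \<open>left_wins_first G\<close>: Left wins moving first; \<open>left_wins_second G\<close>: Left wins
  when Right moves first.\<close>

function left_wins_first :: "game \<Rightarrow> bool" and left_wins_second :: "game \<Rightarrow> bool" where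
  "left_wins_first (Game GL GR) \<longleftrightarrow> GL = {||} \<or> (\<exists>x\<in>fset GL. left_wins_second x)"
| "left_wins_second (Game GL GR) \<longleftrightarrow> GR \<noteq> {||} \<and> (\<forall>y\<in>fset GR. left_wins_first y)"
  by pat_completeness auto
termination
  by (relation "measure (case_sum size size)") (auto dest: game_size_lopt game_size_ropt)

datatype outcome = OL | ON | OP | OR

definition outcome :: "game \<Rightarrow> outcome" where
  "outcome G = (if left_wins_first G then (if left_wins_second G then OL else ON)
                else (if left_wins_second G then OP else OR))"

definition outcome_le :: "outcome \<Rightarrow> outcome \<Rightarrow> bool" where
  "outcome_le a b \<longleftrightarrow> a = b \<or> a = OR \<or> b = OL"

definition is_option :: "game \<Rightarrow> game \<Rightarrow> bool" where
  "is_option x G \<longleftrightarrow> x |\<in>| lopts G \<or> x |\<in>| ropts G"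

definition universe :: "game set \<Rightarrow> bool" where
  "universe U \<longleftrightarrow>
     (\<forall>G\<in>U. \<forall>x. is_option x G \<longrightarrow> x \<in> U) \<and>
     (\<forall>G\<in>U. \<forall>H\<in>U. gsum G H \<in> U) \<and>
     (\<forall>G\<in>U. conj G \<in> U) \<and>
     (\<forall>A B. A \<noteq> {||} \<and> B \<noteq> {||} \<and> fset A \<subseteq> U \<and> fset B \<subseteq> U \<longrightarrow> Game A B \<in> U)"

definition game_ge_in :: "game set \<Rightarrow> game \<Rightarrow> game \<Rightarrow> bool" where
  "game_ge_in U G H \<longleftrightarrow> (\<forall>X\<in>U. outcome_le (outcome (gsum H X)) (outcome (gsum G X)))"

definition game_ge :: "game \<Rightarrow> game \<Rightarrow> bool" where
  "game_ge G H \<longleftrightarrow> (\<forall>U. universe U \<longrightarrow> game_ge_in U G H)"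

definition game_eq :: "game \<Rightarrow> game \<Rightarrow> bool" where
  "game_eq G H \<longleftrightarrow> game_ge G H \<and> game_ge H G"

definition subposition :: "game \<Rightarrow> game \<Rightarrow> bool" where
  "subposition K G \<longleftrightarrow> (\<lambda>x y. is_option x y)\<^sup>*\<^sup>* K G"

definition left_dead_end :: "game \<Rightarrow> bool" where
  "left_dead_end G \<longleftrightarrow> (\<forall>K. subposition K G \<longrightarrow> lopts K = {||})"

function height :: "game \<Rightarrow> nat" where
  "height (Game GL GR) =
     (if GL = {||} \<and> GR = {||} then 0
      else Suc (Max (fset (height |`| (GL |\<union>| GR)))))"
  by pat_completeness auto
termination
  by (relation "measure size") (auto dest: game_size_lopt game_size_ropt)

definition birthday :: "game \<Rightarrow> nat" where
  "birthday G = (LEAST n. \<exists>K. left_dead_end K \<and> game_eq K G \<and> height K = n)"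

end

theory Submission
  imports Defs
begin

lemma gsum_lopts: "lopts (gsum G H) = (\<lambda>x. gsum x H) |`| lopts G |\<union>| (\<lambda>y. gsum G y) |`| lopts H"
  by (cases G; cases H) simp

lemma gsum_ropts: "ropts (gsum G H) = (\<lambda>x. gsum x H) |`| ropts G |\<union>| (\<lambda>y. gsum G y) |`| ropts H"
  by (cases G; cases H) simp

declare gsum.simps[simp del]

lemma lwf_eq: "left_wins_first G \<longleftrightarrow> lopts G = {||} \<or> (\<exists>x\<in>fset (lopts G). left_wins_second x)"
  by (cases G) simp

lemma lws_eq: "left_wins_second G \<longleftrightarrow> ropts G \<noteq> {||} \<and> (\<forall>y\<in>fset (ropts G). left_wins_first y)"
  by (cases G) simp

lemma height_leaf: "lopts G = {||} \<Longrightarrow> ropts G = {||} \<Longrightarrow> height G = 0"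
  by (cases G) simp

lemma height_Game_ne: "GL |\<union>| GR \<noteq> {||} \<Longrightarrow> height (Game GL GR) = Suc (Max (height ` fset (GL |\<union>| GR)))"
  by (simp add: fset.set_map)

declare height.simps[simp del]

lemma height_opt: "is_option x G \<Longrightarrow> height x < height G"
proof (cases G)
  case (Game GL GR)
  assume "is_option x G"
  then have x: "x |\<in>| GL |\<union>| GR" using Game by (auto simp: is_option_def)
  then have ne: "GL |\<union>| GR \<noteq> {||}" by auto
  have "height x \<le> Max (height ` fset (GL |\<union>| GR))"
    by (rule Max_ge) (use x in auto)
  then show ?thesis using Game height_Game_ne[OF ne] by simp
qed

lemma height_attain: "lopts G \<noteq> {||} \<or> ropts G \<noteq> {||} \<Longrightarrow> \<exists>x. is_option x G \<and> height G = Suc (height x)"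
proof (cases G)
  case (Game GL GR)
  assume ne: "lopts G \<noteq> {||} \<or> ropts G \<noteq> {||}"
  then have ne2: "GL |\<union>| GR \<noteq> {||}" using Game by auto
  then have "Max (height ` fset (GL |\<union>| GR)) \<in> height ` fset (GL |\<union>| GR)"
    by (intro Max_in) auto
  then obtain x where x: "x \<in> fset (GL |\<union>| GR)" "height x = Max (height ` fset (GL |\<union>| GR))"
    by (metis imageE)
  have "is_option x G" using x(1) Game by (auto simp: is_option_def)
  then show ?thesis
    using x(2) Game height_Game_ne[OF ne2] by (intro exI[of _ x]) simp
qed

lemma height_gsum: "height (gsum G H) = height G + height H"
proof (induction G H rule: gsum.induct)
  case (1 GL GR HL HR)
  define G where "G = Game GL GR"
  define H where "H = Game HL HR"
  have IH1: "\<And>x. is_option x G \<Longrightarrow> height (gsum x H) = height x + height H"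
    using "1.IH" unfolding G_def H_def is_option_def by (auto simp del: height.simps)
  have IH2: "\<And>y. is_option y H \<Longrightarrow> height (gsum G y) = height G + height y"
    using "1.IH" unfolding G_def H_def is_option_def by (auto simp del: height.simps)
  have opt: "is_option z (gsum G H) \<longleftrightarrow> (\<exists>x. is_option x G \<and> z = gsum x H) \<or> (\<exists>y. is_option y H \<and> z = gsum G y)" for z
    unfolding is_option_def gsum_lopts gsum_ropts by auto
  have le: "height (gsum G H) \<le> height G + height H"
  proof (cases "lopts (gsum G H) = {||} \<and> ropts (gsum G H) = {||}")
    case True then show ?thesis using height_leaf by simp
  next
    case False
    then obtain z where z: "is_option z (gsum G H)" "height (gsum G H) = Suc (height z)"
      using height_attain by blast
    from z(1)[unfolded opt] show ?thesis
    proof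
      assume "\<exists>x. is_option x G \<and> z = gsum x H"
      then obtain x where "is_option x G" "z = gsum x H" by blast
      then show ?thesis using z(2) IH1 height_opt[of x G] by simp
    next
      assume "\<exists>y. is_option y H \<and> z = gsum G y"
      then obtain y where "is_option y H" "z = gsum G y" by blast
      then show ?thesis using z(2) IH2 height_opt[of y H] by simp
    qed
  qed
  have ge: "height G + height H \<le> height (gsum G H)"
  proof (cases "lopts G = {||} \<and> ropts G = {||}")
    case True
    note hG = height_leaf[OF True[THEN conjunct1] True[THEN conjunct2]]
    show ?thesis
    proof (cases "lopts H = {||} \<and> ropts H = {||}")
      case True
      then show ?thesis using hG height_leaf by simp
    next
      case False
      then obtain y where y: "is_option y H" "height H = Suc (height y)"
        using height_attain by blast
      have "is_option (gsum G y) (gsum G H)" using opt y by blast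
      then have "height (gsum G y) < height (gsum G H)" by (rule height_opt)
      then show ?thesis using IH2[OF y(1)] y(2) by simp
    qed
  next
    case False
    then obtain x where x: "is_option x G" "height G = Suc (height x)"
      using height_attain by blast
    have "is_option (gsum x H) (gsum G H)" using opt x by blast
    then have "height (gsum x H) < height (gsum G H)" by (rule height_opt)
    then show ?thesis using IH1[OF x(1)] x(2) by simp
  qed
  have "height (gsum G H) = height G + height H" using le ge by (rule antisym)
  then show ?case unfolding G_def H_def .
qed

lemma ld_iff: "left_dead_end G \<longleftrightarrow> lopts G = {||} \<and> (\<forall>x. is_option x G \<longrightarrow> left_dead_end x)"
proof
  assume a: "left_dead_end G"
  show "lopts G = {||} \<and> (\<forall>x. is_option x G \<longrightarrow> left_dead_end x)"
  proof
    show "lopts G = {||}" using a unfolding left_dead_end_def subposition_def by auto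
  next
    show "\<forall>x. is_option x G \<longrightarrow> left_dead_end x"
    proof (intro allI impI)
      fix x assume "is_option x G"
      then show "left_dead_end x" using a unfolding left_dead_end_def subposition_def
        by (meson rtranclp.rtrancl_into_rtrancl)
    qed
  qed
next
  assume a: "lopts G = {||} \<and> (\<forall>x. is_option x G \<longrightarrow> left_dead_end x)"
  show "left_dead_end G" unfolding left_dead_end_def
  proof (intro allI impI)
    fix K assume "subposition K G"
    then have "(\<lambda>x y. is_option x y)\<^sup>*\<^sup>* K G" unfolding subposition_def .
    then show "lopts K = {||}"
    proof (cases rule: rtranclp.cases)
      case rtrancl_refl then show ?thesis using a by simp
    next
      case (rtrancl_into_rtrancl y)
      note step = rtrancl_into_rtrancl
      then have "left_dead_end y" using a by simp
      then show ?thesis using step(1) unfolding left_dead_end_def subposition_def by simp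
    qed
  qed
qed

lemma ld_gsum: "left_dead_end G \<Longrightarrow> left_dead_end H \<Longrightarrow> left_dead_end (gsum G H)"
proof (induction G H rule: gsum.induct)
  case (1 GL GR HL HR)
  define G where "G = Game GL GR"
  define H where "H = Game HL HR"
  have g: "left_dead_end G" "left_dead_end H" using 1 unfolding G_def H_def by auto
  have oG: "\<And>x. is_option x G \<Longrightarrow> left_dead_end x" using g(1) ld_iff by blast
  have oH: "\<And>x. is_option x H \<Longrightarrow> left_dead_end x" using g(2) ld_iff by blast
  have IH1: "\<And>x. is_option x G \<Longrightarrow> left_dead_end (gsum x H)"
  proof -
    fix x assume x: "is_option x G"
    then have "x |\<in>| GL \<or> x |\<in>| GR" unfolding G_def is_option_def by simp
    then show "left_dead_end (gsum x H)" using "1.IH"(1,3) oG[OF x] g(2) unfolding H_def by blast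
  qed
  have IH2: "\<And>y. is_option y H \<Longrightarrow> left_dead_end (gsum G y)"
  proof -
    fix y assume y: "is_option y H"
    then have "y |\<in>| HL \<or> y |\<in>| HR" unfolding H_def is_option_def by simp
    then show "left_dead_end (gsum G y)" using "1.IH"(2,4) oH[OF y] g(1) unfolding G_def by blast
  qed
  have opt: "is_option z (gsum G H) \<longleftrightarrow> (\<exists>x. is_option x G \<and> z = gsum x H) \<or> (\<exists>y. is_option y H \<and> z = gsum G y)" for z
    unfolding is_option_def gsum_lopts gsum_ropts by auto
  have lG: "lopts G = {||}" using g(1) ld_iff by blast
  have lH: "lopts H = {||}" using g(2) ld_iff by blast
  have l: "lopts (gsum G H) = {||}" using lG lH gsum_lopts by simp
  have o: "\<forall>z. is_option z (gsum G H) \<longrightarrow> left_dead_end z"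
    unfolding opt using IH1 IH2 by blast
  have "left_dead_end (gsum G H)"
    using l o ld_iff by blast
  then show ?case unfolding G_def H_def .
qed

inductive haspath :: "game \<Rightarrow> nat \<Rightarrow> bool" where
  hp0: "ropts G = {||} \<Longrightarrow> haspath G 0"
| hpS: "g |\<in>| ropts G \<Longrightarrow> haspath g m \<Longrightarrow> haspath G (Suc m)"

lemma haspath_0: "haspath G 0 \<longleftrightarrow> ropts G = {||}"
  by (auto elim: haspath.cases intro: hp0)

lemma haspath_Suc: "haspath G (Suc m) \<longleftrightarrow> (\<exists>g\<in>fset (ropts G). haspath g m)"
  by (auto elim: haspath.cases intro: hpS)

lemma haspath_le: "haspath G n \<Longrightarrow> n \<le> height G"
proof (induction rule: haspath.induct)
  case (hp0 G) then show ?case by simp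
next
  case (hpS g G m)
  then have "height g < height G" by (intro height_opt) (simp add: is_option_def)
  then show ?case using hpS by simp
qed

lemma haspath_height: "left_dead_end G \<Longrightarrow> haspath G (height G)"
proof (induction G rule: measure_induct_rule[of size])
  case (less G)
  show ?case
  proof (cases "ropts G = {||}")
    case True
    then show ?thesis using less ld_iff height_leaf hp0 by metis
  next
    case False
    then obtain x where x: "is_option x G" "height G = Suc (height x)"
      using height_attain by blast
    have lo: "lopts G = {||}" using less ld_iff by blast
    then have xr: "x |\<in>| ropts G" using x by (simp add: is_option_def)
    have "size x < size G" using xr by (cases G) (auto dest: game_size_ropt)
    moreover have "left_dead_end x" using less x ld_iff by blast
    ultimately have "haspath x (height x)" using less by blast
    then show ?thesis using x xr hpS by metis
  qed
qed

fun tg :: "nat \<Rightarrow> game" where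
  "tg 0 = Game {||} {||}"
| "tg (Suc n) = Game {|tg n|} {|tg 0|}"

lemma lwf_dead: "lopts G = {||} \<Longrightarrow> left_wins_first G"
  by (simp add: lwf_eq)

lemma key: "left_dead_end G \<Longrightarrow> left_wins_second (gsum G (tg n)) \<longleftrightarrow> \<not> haspath G n"
proof (induction n arbitrary: G)
  case 0
  have lo: "lopts G = {||}" using 0 ld_iff by blast
  have lox: "x |\<in>| ropts G \<Longrightarrow> lopts x = {||}" for x
    using "0" ld_iff is_option_def by blast
  have "left_wins_first y" if "y |\<in>| ropts (gsum G (tg 0))" for y
    using that lo lox by (intro lwf_dead) (auto simp: gsum_ropts gsum_lopts)
  then show ?case by (auto simp: lws_eq haspath_0 gsum_ropts)
next
  case (Suc m)
  have lo: "lopts G = {||}" using Suc ld_iff by blast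
  have ldx: "x |\<in>| ropts G \<Longrightarrow> left_dead_end x" for x
    using Suc.prems ld_iff is_option_def by blast
  have lox: "x |\<in>| ropts G \<Longrightarrow> lopts x = {||}" for x
    using ldx ld_iff by blast
  have A: "left_wins_first (gsum x (tg (Suc m))) \<longleftrightarrow> \<not> haspath x m" if "x |\<in>| ropts G" for x
    using Suc.IH[OF ldx[OF that]] lox[OF that] by (simp add: lwf_eq gsum_lopts)
  have B: "left_wins_first (gsum G (tg 0))"
    using lo by (intro lwf_dead) (simp add: gsum_lopts)
  have "ropts (gsum G (tg (Suc m))) = (\<lambda>x. gsum x (tg (Suc m))) |`| ropts G |\<union>| {|gsum G (tg 0)|}"
    by (simp add: gsum_ropts)
  then show ?case using A B by (auto simp: lws_eq haspath_Suc)
qed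

lemma universe_UNIV: "universe UNIV"
  unfolding universe_def by simp

lemma ge_height:
  assumes "left_dead_end K" "left_dead_end G" "game_ge K G"
  shows "height K \<le> height G"
proof (rule ccontr)
  assume "\<not> height K \<le> height G"
  define n where "n = height K"
  have "\<not> haspath G n" using haspath_le \<open>\<not> height K \<le> height G\<close> n_def by fastforce
  then have g: "left_wins_second (gsum G (tg n))" using key assms(2) by blast
  have "haspath K n" using haspath_height assms(1) n_def by simp
  then have k: "\<not> left_wins_second (gsum K (tg n))" using key assms(1) by blast
  have "game_ge_in UNIV K G" using assms(3) universe_UNIV unfolding game_ge_def by blast
  then have "outcome_le (outcome (gsum G (tg n))) (outcome (gsum K (tg n)))"
    unfolding game_ge_in_def by blast
  then show False using g k unfolding outcome_le_def outcome_def
    by (auto split: if_splits)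
qed

lemma birthday_height:
  assumes "left_dead_end G"
  shows "birthday G = height G"
  unfolding birthday_def
proof (rule Least_equality)
  show "\<exists>K. left_dead_end K \<and> game_eq K G \<and> height K = height G"
    using assms by (intro exI[of _ G]) (simp add: game_eq_def game_ge_def game_ge_in_def outcome_le_def)
next
  fix n assume "\<exists>K. left_dead_end K \<and> game_eq K G \<and> height K = n"
  then obtain K where "left_dead_end K" "game_eq K G" "height K = n" by blast
  then show "height G \<le> n" using ge_height assms unfolding game_eq_def by blast
qed

theorem mainTheorem13:
  assumes "left_dead_end G" and "left_dead_end H"
  shows "birthday (gsum G H) = birthday G + birthday H"
  using assms ld_gsum birthday_height height_gsum by simp

end
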